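(* For every $k\ge1$, the derived subgroup $B_k'$ is contained in $G_k$, i.e. $B_k'\le G_k$.
   Context: Let $C_2=\{e,\sigma\}$ with $\sigma=(1,2)$. Define $B_1=C_2$ and $B_k=B_{k-1}\wr C_2$ for $k>1$, with elements written as wreath recursions $(g_1,g_2)\pi$, $g_1,g_2\in B_{k-1}$, $\pi\in C_2$, and multiplication $(g_1,g_2)\pi\cdot(h_1,h_2)\rho=(g_1h_{\pi(1)},g_2h_{\pi(2)})\pi\rho$ (so $B_k$ is the group of automorphisms of the binary rooted tree with $k$ levels, $B_k\cong\mathrm{Syl}_2 S_{2^k}$). Define $G_1=\{e\}$ and, for $k>1$, $G_k=\{(g_1,g_2)\pi\in B_k : g_1g_2\in G_{k-1}\}$. *)

theory Defs
  imports "HOL-Algebra.Algebra"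
begin

text \<open>Automorphisms of the binary rooted tree, as wreath recursions (portraits).
  Lf is the unique element of the trivial group B_0; Nd g1 g2 p is (g1,g2)pi,
  where p = True means pi = sigma (the swap) and p = False means pi = e.\<close>
datatype aut = Lf | Nd aut aut bool

text \<open>Wreath multiplication (g1,g2)pi * (h1,h2)rho = (g1 h_pi(1), g2 h_pi(2)) pi rho.\<close>
fun amul :: "aut \<Rightarrow> aut \<Rightarrow> aut" where
  "amul (Nd g1 g2 p) (Nd h1 h2 q) =
     Nd (amul g1 (if p then h2 else h1)) (amul g2 (if p then h1 else h2)) (p \<noteq> q)"
| "amul _ _ = Lf"

fun aid :: "nat \<Rightarrow> aut" where
  "aid 0 = Lf"
| "aid (Suc k) = Nd (aid k) (aid k) False"

text \<open>B k: automorphisms of the binary tree with k levels (B_0 trivial, B_1 = C_2,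
  B_k = B_(k-1) wr C_2).\<close>
fun Bset :: "nat \<Rightarrow> aut set" where
  "Bset 0 = {Lf}"
| "Bset (Suc k) = {Nd g1 g2 p | g1 g2 p. g1 \<in> Bset k \<and> g2 \<in> Bset k}"

definition Bgrp :: "nat \<Rightarrow> aut monoid" where
  "Bgrp k = \<lparr>carrier = Bset k, monoid.mult = amul, one = aid k\<rparr>"

text \<open>G_1 = {e}; G_k = {(g1,g2)pi in B_k : g1 g2 in G_(k-1)} for k > 1.
  (G 0 is an irrelevant filler value.)\<close>
fun Gset :: "nat \<Rightarrow> aut set" where
  "Gset 0 = {Lf}"
| "Gset (Suc 0) = {aid 1}"
| "Gset (Suc (Suc k)) =
     {Nd g1 g2 p | g1 g2 p. g1 \<in> Bset (Suc k) \<and> g2 \<in> Bset (Suc k) \<and> amul g1 g2 \<in> Gset (Suc k)}"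

end

theory Submission
  imports Defs
begin

fun ainv :: "aut \<Rightarrow> aut" where
  "ainv (Nd g1 g2 p) = Nd (ainv (if p then g2 else g1)) (ainv (if p then g1 else g2)) p"
| "ainv Lf = Lf"

fun bp :: "nat \<Rightarrow> aut \<Rightarrow> bool" where
  "bp (Suc 0) (Nd _ _ p) = p"
| "bp (Suc (Suc k)) (Nd g1 g2 _) = (bp (Suc k) g1 \<noteq> bp (Suc k) g2)"
| "bp _ _ = False"

lemma Bset_Suc_iff: "x \<in> Bset (Suc k) \<longleftrightarrow> (\<exists>g1 g2 p. x = Nd g1 g2 p \<and> g1 \<in> Bset k \<and> g2 \<in> Bset k)"
  by auto

lemma amul_closed: "g \<in> Bset k \<Longrightarrow> h \<in> Bset k \<Longrightarrow> amul g h \<in> Bset k"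
  by (induction k arbitrary: g h) auto

lemma aid_closed: "aid k \<in> Bset k"
  by (induction k) auto

lemma ainv_closed: "g \<in> Bset k \<Longrightarrow> ainv g \<in> Bset k"
  by (induction k arbitrary: g) auto

lemma aid_left: "g \<in> Bset k \<Longrightarrow> amul (aid k) g = g"
  by (induction k arbitrary: g) auto

lemma aid_right: "g \<in> Bset k \<Longrightarrow> amul g (aid k) = g"
  by (induction k arbitrary: g) auto

lemma ainv_left: "g \<in> Bset k \<Longrightarrow> amul (ainv g) g = aid k"
  by (induction k arbitrary: g) auto

lemma amul_assoc: "g \<in> Bset k \<Longrightarrow> h \<in> Bset k \<Longrightarrow> f \<in> Bset k \<Longrightarrow>
   amul (amul g h) f = amul g (amul h f)"
  by (induction k arbitrary: g h f) auto

lemma Bgrp_group: "group (Bgrp k)"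
  apply (rule groupI)
  apply (auto simp: Bgrp_def amul_closed aid_closed aid_left amul_assoc)
  using ainv_closed ainv_left by blast

lemma bp_mul: "k \<ge> 1 \<Longrightarrow> g \<in> Bset k \<Longrightarrow> h \<in> Bset k \<Longrightarrow> bp k (amul g h) = (bp k g \<noteq> bp k h)"
proof (induction k arbitrary: g h rule: nat_less_induct)
  case (1 n)
  then obtain m where n: "n = Suc m" by (cases n) auto
  show ?case
  proof (cases m)
    case 0 then show ?thesis using 1 n by auto
  next
    case (Suc j)
    from 1 obtain g1 g2 p h1 h2 q where g: "g = Nd g1 g2 p" "g1 \<in> Bset m" "g2 \<in> Bset m"
      and h: "h = Nd h1 h2 q" "h1 \<in> Bset m" "h2 \<in> Bset m" using n by auto
    have IH: "\<And>a b. a \<in> Bset m \<Longrightarrow> b \<in> Bset m \<Longrightarrow> bp m (amul a b) = (bp m a \<noteq> bp m b)"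
      using 1 n Suc by auto
    show ?thesis using g h IH n Suc by auto
  qed
qed

lemma bp_aid: "bp k (aid k) = False"
  apply (cases k)
   apply simp
  apply (case_tac nat)
   apply auto
  done

lemma Gset_char: "k \<ge> 1 \<Longrightarrow> Gset k = {g \<in> Bset k. \<not> bp k g}"
proof (induction k rule: nat_less_induct)
  case (1 n)
  then obtain m where n: "n = Suc m" by (cases n) auto
  show ?case
  proof (cases m)
    case 0 then show ?thesis using n by auto
  next
    case (Suc j)
    have IH: "Gset m = {g \<in> Bset m. \<not> bp m g}" using 1 n Suc by auto
    have bm: "\<And>a b. a \<in> Bset (Suc j) \<Longrightarrow> b \<in> Bset (Suc j) \<Longrightarrow> bp (Suc j) (amul a b) = (bp (Suc j) a \<noteq> bp (Suc j) b)"
      using bp_mul[of "Suc j"] by simp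
    have ac: "\<And>a b. a \<in> Bset (Suc j) \<Longrightarrow> b \<in> Bset (Suc j) \<Longrightarrow> amul a b \<in> Bset (Suc j)"
      using amul_closed by blast
    show ?thesis unfolding n Suc Gset.simps(3) Bset.simps(2)[of "Suc j"] IH[unfolded Suc]
      using bm ac by (auto simp del: Bset.simps)
  qed
qed

theorem mainTheorem9:
  fixes k :: nat
  assumes "k \<ge> 1"
  shows "derived (Bgrp k) (carrier (Bgrp k)) \<subseteq> Gset k"
proof
  interpret group "Bgrp k" by (rule Bgrp_group)
  have inv_bp: "bp k (inv\<^bsub>Bgrp k\<^esub> x) = bp k x" if "x \<in> Bset k" for x
  proof -
    have "inv\<^bsub>Bgrp k\<^esub> x \<otimes>\<^bsub>Bgrp k\<^esub> x = \<one>\<^bsub>Bgrp k\<^esub>" using that l_inv[of x] by (simp add: Bgrp_def)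
    then have "amul (inv\<^bsub>Bgrp k\<^esub> x) x = aid k" by (simp add: Bgrp_def)
    moreover have "inv\<^bsub>Bgrp k\<^esub> x \<in> Bset k" using that by (metis Bgrp_def inv_closed partial_object.select_convs(1))
    ultimately show ?thesis using bp_mul[OF assms] that bp_aid by metis
  qed
  have C: "carrier (Bgrp k) = Bset k" "\<And>a b. a \<otimes>\<^bsub>Bgrp k\<^esub> b = amul a b" by (simp_all add: Bgrp_def)
  have ic: "\<And>x. x \<in> Bset k \<Longrightarrow> inv\<^bsub>Bgrp k\<^esub> x \<in> Bset k" using C(1) inv_closed by metis
  fix x assume "x \<in> derived (Bgrp k) (carrier (Bgrp k))"
  then have "x \<in> Bset k \<and> \<not> bp k x" unfolding derived_def
  proof (induction rule: generate.induct)
    case one then show ?case using bp_aid aid_closed by (simp add: Bgrp_def)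
  next
    case (incl h) then show ?case using C inv_bp bp_mul[OF assms] ic by (auto simp: amul_closed)
  next
    case (inv h) then show ?case using C inv_bp bp_mul[OF assms] ic
      by (auto simp: amul_closed)
  next
    case (eng h1 h2) then show ?case using C bp_mul[OF assms] by (auto simp: amul_closed)
  qed
  then show "x \<in> Gset k" using Gset_char[OF assms] by auto
qed

end
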